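(* Let $G$ be a group generated by $x_1,\dots,x_n$, with finite commutator subgroup $C=[G,G]$, such that $G/C$ is free abelian of rank $n$ with basis the images of $x_1,\dots,x_n$. Let $Z$ be the center of $G$ and $Z_{CG}=Z\cap C$. Then there is a subgroup $\widetilde Z\le Z$ with $\widetilde Z\cong\mathbb Z^n$ and $\widetilde Z\cap Z_{CG}$ trivial such that $Z=\widetilde Z\,Z_{CG}$ (a direct product). Moreover $\mathrm{rank}(Z)=n+\mathrm{rank}(Z_{CG})$.
   Context: The rank of a group is the minimal cardinality of a generating set. *)

theory Defs
  imports "HOL-Algebra.Algebra"
begin

definition group_center :: "('a, 'b) monoid_scheme \<Rightarrow> 'a set" where
  "group_center G = {z \<in> carrier G. \<forall>g \<in> carrier G. z \<otimes>\<^bsub>G\<^esub> g = g \<otimes>\<^bsub>G\<^esub> z}"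

definition free_abelian_basis :: "('a, 'b) monoid_scheme \<Rightarrow> (nat \<Rightarrow> 'a) \<Rightarrow> nat \<Rightarrow> bool" where
  "free_abelian_basis H b n \<longleftrightarrow> comm_group H \<and> (\<forall>i<n. b i \<in> carrier H) \<and>
     (\<forall>y \<in> carrier H. \<exists>!k :: nat \<Rightarrow> int. (\<forall>i\<ge>n. k i = 0) \<and>
        y = finprod H (\<lambda>i. b i [^]\<^bsub>H\<^esub> k i) {..<n})"

definition group_rank :: "('a, 'b) monoid_scheme \<Rightarrow> 'a set \<Rightarrow> nat" where
  "group_rank G H = (LEAST k. \<exists>S. S \<subseteq> H \<and> finite S \<and> card S = k \<and> generate G S = H)"

end

theory Submission
  imports Defs
begin


definition lc :: "nat \<Rightarrow> (nat \<Rightarrow> int) \<Rightarrow> (nat \<Rightarrow> nat \<Rightarrow> int) \<Rightarrow> nat \<Rightarrow> int" where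
  "lc m a v = (\<lambda>j. \<Sum>i<m. a i * v i j)"

lemma smul_closed_nat:
  fixes L :: "(nat \<Rightarrow> int) set"
  assumes "(\<lambda>j. 0) \<in> L" "\<forall>u\<in>L. \<forall>w\<in>L. (\<lambda>j. u j + w j) \<in> L" "u \<in> L"
  shows "(\<lambda>j. int k * u j) \<in> L"
proof (induction k)
  case 0 then show ?case using assms(1) by simp
next
  case (Suc k)
  have "(\<lambda>j. int (Suc k) * u j) = (\<lambda>j. int k * u j + u j)" by (auto simp: algebra_simps)
  then show ?case using bspec[OF bspec[OF assms(2) Suc] assms(3)] by simp
qed

lemma smul_closed:
  fixes L :: "(nat \<Rightarrow> int) set"
  assumes "(\<lambda>j. 0) \<in> L" "\<forall>u\<in>L. \<forall>w\<in>L. (\<lambda>j. u j + w j) \<in> L" "\<forall>u\<in>L. (\<lambda>j. - u j) \<in> L" "u \<in> L"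
  shows "(\<lambda>j. q * u j) \<in> L"
proof (cases "q \<ge> 0")
  case True
  then show ?thesis using smul_closed_nat[OF assms(1,2,4), of "nat q"] by simp
next
  case False
  have h: "(\<lambda>j. int (nat (-q)) * u j) \<in> L" using smul_closed_nat[OF assms(1,2,4)] by blast
  have "(\<lambda>j. - (int (nat (-q)) * u j)) \<in> L" using bspec[OF assms(3) h] by simp
  moreover have "(\<lambda>j. - (int (nat (-q)) * u j)) = (\<lambda>j. q * u j)" using False by auto
  ultimately show ?thesis by simp
qed

lemma lattice_basis:
  fixes L :: "(nat \<Rightarrow> int) set"
  assumes "(\<lambda>j. 0) \<in> L" "\<forall>u\<in>L. \<forall>w\<in>L. (\<lambda>j. u j + w j) \<in> L" "\<forall>u\<in>L. (\<lambda>j. - u j) \<in> L"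
    "\<forall>u\<in>L. \<forall>i\<ge>n. u i = 0" "\<forall>i<n. \<exists>N. N \<noteq> 0 \<and> (\<lambda>j. if j = i then N else 0) \<in> L"
  shows "\<exists>v. (\<forall>i<n. v i \<in> L) \<and> (\<forall>w\<in>L. \<exists>a. w = lc n a v)
             \<and> (\<forall>a b. lc n a v = lc n b v \<longrightarrow> (\<forall>i<n. a i = b i))"
  using assms
proof (induction n arbitrary: L)
  case 0
  have "\<forall>w\<in>L. w = lc 0 a v" for a v using 0(4) by (auto simp: lc_def)
  then show ?case by auto
next
  case (Suc n)
  define L' where "L' = {w\<in>L. w n = 0}"
  have "\<exists>v. (\<forall>i<n. v i \<in> L') \<and> (\<forall>w\<in>L'. \<exists>a. w = lc n a v)
             \<and> (\<forall>a b. lc n a v = lc n b v \<longrightarrow> (\<forall>i<n. a i = b i))"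
  proof (rule Suc.IH)
    show "(\<lambda>j. 0) \<in> L'" using Suc.prems(1) by (simp add: L'_def)
    show "\<forall>u\<in>L'. \<forall>w\<in>L'. (\<lambda>j. u j + w j) \<in> L'" using Suc.prems(2) unfolding L'_def by auto
    show "\<forall>u\<in>L'. (\<lambda>j. - u j) \<in> L'" using Suc.prems(3) unfolding L'_def by auto
    show "\<forall>u\<in>L'. \<forall>i\<ge>n. u i = 0"
    proof (intro ballI allI impI)
      fix u i assume "u \<in> L'" "n \<le> i" then show "u i = 0" using Suc.prems(4) by (cases "i = n") (auto simp: L'_def)
    qed
    show "\<forall>i<n. \<exists>N. N \<noteq> 0 \<and> (\<lambda>j. if j = i then N else 0) \<in> L'"
      using Suc.prems(5) by (auto simp: L'_def)
  qed
  then obtain v' where v'L: "\<forall>i<n. v' i \<in> L'" and v'span: "\<forall>w\<in>L'. \<exists>a. w = lc n a v'"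
    and v'ind: "\<forall>a b. lc n a v' = lc n b v' \<longrightarrow> (\<forall>i<n. a i = b i)" by blast
  obtain N where N: "N \<noteq> 0" "(\<lambda>j. if j = n then N else 0) \<in> L" using Suc.prems(5) by auto
  have ex: "\<exists>d::nat. d > 0 \<and> (\<exists>w\<in>L. w n = int d)"
  proof (cases "N > 0")
    case True then show ?thesis using N by (intro exI[of _ "nat N"]) (auto intro!: bexI[of _ "(\<lambda>j. if j = n then N else 0)"])
  next
    case False
    have "(\<lambda>j. - (if j = n then N else 0)) \<in> L" using bspec[OF Suc.prems(3) N(2)] by simp
    then show ?thesis using False N by (intro exI[of _ "nat (-N)"]) (auto intro!: bexI[of _ "(\<lambda>j. - (if j = n then N else 0))"])
  qed
  define d where "d = (LEAST d::nat. d > 0 \<and> (\<exists>w\<in>L. w n = int d))"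
  have dP: "d > 0 \<and> (\<exists>w\<in>L. w n = int d)" unfolding d_def using LeastI_ex[OF ex] .
  then obtain u where u: "u \<in> L" "u n = int d" by blast
  have dmin: "\<And>e::nat. e > 0 \<Longrightarrow> (\<exists>w\<in>L. w n = int e) \<Longrightarrow> d \<le> e"
    unfolding d_def by (rule Least_le) simp
  have dvd: "w n = (w n div int d) * int d" if "w \<in> L" for w
  proof -
    define q where "q = w n div int d"
    have h: "(\<lambda>j. (-q) * u j) \<in> L" using smul_closed[OF Suc.prems(1-3) u(1)] by blast
    have w2: "(\<lambda>j. w j + (-q) * u j) \<in> L" using bspec[OF bspec[OF Suc.prems(2) that] h] by simp
    have md: "(\<lambda>j. w j + (-q) * u j) n = w n mod int d"
      using u(2) by (simp add: q_def minus_div_mult_eq_mod[symmetric] algebra_simps)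
    have ge: "w n mod int d \<ge> 0" and lt: "w n mod int d < int d" using dP by auto
    have "w n mod int d = 0"
    proof (rule ccontr)
      assume "w n mod int d \<noteq> 0"
      then have pos: "nat (w n mod int d) > 0" using ge by simp
      have "\<exists>w'\<in>L. w' n = int (nat (w n mod int d))" using w2 md ge by (intro bexI[of _ "(\<lambda>j. w j + (-q) * u j)"]) simp_all
      from dmin[OF pos this] show False using lt ge by linarith
    qed
    then show ?thesis by (metis div_mult_mod_eq add.right_neutral)
  qed
  define v where "v = v'(n := u)"
  have lcS: "lc (Suc n) a v = (\<lambda>j. lc n a v' j + a n * u j)" for a
    by (auto simp: lc_def v_def intro!: sum.cong)
  have v'n: "lc n a v' n = 0" for a using v'L by (auto simp: lc_def L'_def intro!: sum.neutral)
  show ?case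
  proof (intro exI[of _ v] conjI allI impI ballI)
    fix i assume "i < Suc n" then show "v i \<in> L" using v'L u by (auto simp: v_def L'_def less_Suc_eq)
  next
    fix w assume w: "w \<in> L"
    define q where "q = w n div int d"
    have h: "(\<lambda>j. (-q) * u j) \<in> L" using smul_closed[OF Suc.prems(1-3) u(1)] by blast
    have "(\<lambda>j. w j + (-q) * u j) \<in> L" using bspec[OF bspec[OF Suc.prems(2) w] h] by simp
    then have w2: "(\<lambda>j. w j + (-q) * u j) \<in> L'"
      using dvd[OF w] u(2) by (simp add: L'_def q_def algebra_simps)
    then obtain a' where a': "(\<lambda>j. w j + (-q) * u j) = lc n a' v'" using v'span by blast
    have "lc (Suc n) (a'(n := q)) v = (\<lambda>j. lc n a' v' j + q * u j)"
      unfolding lcS by (auto simp: lc_def intro!: sum.cong)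
    also have "\<dots> = w" unfolding a'[symmetric] by (auto simp: algebra_simps)
    finally show "\<exists>a. w = lc (Suc n) a v" by metis
  next
    fix a b i assume eq: "lc (Suc n) a v = lc (Suc n) b v" and i: "i < Suc n"
    have "lc (Suc n) a v n = lc (Suc n) b v n" using eq by simp
    then have "a n * int d = b n * int d" unfolding lcS using v'n u(2) by simp
    then have abn: "a n = b n" using dP by simp
    have "lc n a v' = lc n b v'"
    proof
      fix j show "lc n a v' j = lc n b v' j" using fun_cong[OF eq, of j] abn unfolding lcS by simp
    qed
    then show "a i = b i" using v'ind i abn by (auto simp: less_Suc_eq)
  qed
qed



context group
begin

lemma sub_nat_pow_closed: "subgroup B G \<Longrightarrow> b \<in> B \<Longrightarrow> b [^] (k::nat) \<in> B"
  using subgroup_int_pow_closed[of B b "int k"] by (simp add: int_pow_int)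

lemma phi_basic:
  assumes subB: "subgroup B G" and add: "\<forall>a\<in>B. \<forall>b\<in>B. \<phi> (a \<otimes> b) = \<phi> a + (\<phi> b :: int)"
  shows "\<phi> \<one> = 0" and "\<And>b. b \<in> B \<Longrightarrow> \<phi> (inv b) = - \<phi> b"
    and "\<And>b k. b \<in> B \<Longrightarrow> \<phi> (b [^] (k::int)) = k * \<phi> b"
proof -
  have addI: "\<And>a b. a \<in> B \<Longrightarrow> b \<in> B \<Longrightarrow> \<phi> (a \<otimes> b) = \<phi> a + \<phi> b" using add by simp
  have one: "\<one> \<in> B" using subgroup.one_closed[OF subB] .
  have "\<phi> (\<one> \<otimes> \<one>) = \<phi> \<one> + \<phi> \<one>" using addI[OF one one] .
  then show p1: "\<phi> \<one> = 0" by simp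
  have pinv: "\<phi> (inv b) = - \<phi> b" if b: "b \<in> B" for b
  proof -
    have bc: "b \<in> carrier G" using b subgroup.subset[OF subB] by blast
    have ib: "inv b \<in> B" using subgroup.m_inv_closed[OF subB b] .
    have "\<phi> (b \<otimes> inv b) = \<phi> b + \<phi> (inv b)" using addI[OF b ib] .
    then show ?thesis using p1 bc by simp
  qed
  then show "\<And>b. b \<in> B \<Longrightarrow> \<phi> (inv b) = - \<phi> b" by blast
  have pnat: "\<phi> (b [^] (k::nat)) = int k * \<phi> b" if b: "b \<in> B" for b k
  proof (induction k)
    case 0 then show ?case using p1 by simp
  next
    case (Suc k)
    have "\<phi> (b [^] Suc k) = \<phi> (b [^] k \<otimes> b)" by simp
    also have "\<dots> = \<phi> (b [^] k) + \<phi> b" using addI[OF sub_nat_pow_closed[OF subB b, of k] b] .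
    finally show ?case using Suc by (simp add: algebra_simps)
  qed
  show "\<phi> (b [^] (k::int)) = k * \<phi> b" if b: "b \<in> B" for b k
  proof (cases "k < 0")
    case True
    define m where "m = nat (-k)"
    have km: "k = - int m" using True m_def by simp
    have bc: "b \<in> carrier G" using b subgroup.subset[OF subB] by blast
    have "b [^] k = inv (b [^] m)" unfolding km using int_pow_neg_int[OF bc] .
    then have "\<phi> (b [^] k) = - \<phi> (b [^] m)" using pinv[OF sub_nat_pow_closed[OF subB b]] by simp
    then show ?thesis using pnat[OF b, of m] km by simp
  next
    case False
    define m where "m = nat k"
    have km: "k = int m" using False m_def by simp
    show ?thesis unfolding km int_pow_int using pnat[OF b, of m] .
  qed
qed

lemma ker_subgroup:
  assumes subB: "subgroup B G" and add: "\<forall>a\<in>B. \<forall>b\<in>B. \<phi> (a \<otimes> b) = \<phi> a + (\<phi> b :: int)"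
  shows "subgroup {b\<in>B. \<phi> b = 0} G"
proof (rule subgroupI)
  show "{b \<in> B. \<phi> b = 0} \<subseteq> carrier G" using subgroup.subset[OF subB] by blast
  show "{b \<in> B. \<phi> b = 0} \<noteq> {}" using phi_basic(1)[OF subB add] subgroup.one_closed[OF subB] by blast
  show "inv a \<in> {b \<in> B. \<phi> b = 0}" if "a \<in> {b \<in> B. \<phi> b = 0}" for a
    using that phi_basic(2)[OF subB add] subgroup.m_inv_closed[OF subB] by auto
  show "a \<otimes> b \<in> {b \<in> B. \<phi> b = 0}" if "a \<in> {b \<in> B. \<phi> b = 0}" "b \<in> {b \<in> B. \<phi> b = 0}" for a b
    using that add subgroup.m_closed[OF subB] by auto
qed

lemma gen_insert:
  assumes subB: "subgroup B G" and comm: "\<forall>a\<in>B. \<forall>b\<in>B. a \<otimes> b = b \<otimes> a"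
    and b0: "b0 \<in> B" and S: "S \<subseteq> B"
  shows "generate G (insert b0 S) \<subseteq> {x. \<exists>k::int. \<exists>s\<in>generate G S. x = b0 [^] k \<otimes> s}"
proof (rule generate_subgroup_incl)
  define R where "R = {x. \<exists>k::int. \<exists>s\<in>generate G S. x = b0 [^] k \<otimes> s}"
  have memR: "b0 [^] (k::int) \<otimes> s \<in> R" if "s \<in> generate G S" for k s
    unfolding R_def using that by blast
  have SG: "S \<subseteq> carrier G" using S subgroup.subset[OF subB] by blast
  have gS: "generate G S \<subseteq> B" using generate_subgroup_incl[OF S subB] .
  have b0c: "b0 \<in> carrier G" using b0 subgroup.subset[OF subB] by blast
  note gsub = generate_is_subgroup[OF SG]
  show "insert b0 S \<subseteq> {x. \<exists>k::int. \<exists>s\<in>generate G S. x = b0 [^] k \<otimes> s}"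
    unfolding R_def[symmetric]
  proof
    fix x assume "x \<in> insert b0 S"
    then show "x \<in> R"
    proof
      assume "x = b0"
      then have "x = b0 [^] (1::int) \<otimes> \<one>" using b0c by simp
      then show ?thesis using memR[OF subgroup.one_closed[OF gsub]] by simp
    next
      assume x: "x \<in> S"
      then have "x = b0 [^] (0::int) \<otimes> x" using SG by auto
      moreover have "b0 [^] (0::int) \<otimes> x \<in> R" using memR[OF generate.incl[OF x]] .
      ultimately show ?thesis by simp
    qed
  qed
  show "subgroup {x. \<exists>k::int. \<exists>s\<in>generate G S. x = b0 [^] k \<otimes> s} G"
    unfolding R_def[symmetric]
  proof (rule subgroupI)
    show "R \<subseteq> carrier G"
    proof
      fix x assume "x \<in> R"
      then obtain k s where ks: "x = b0 [^] (k::int) \<otimes> s" "s \<in> generate G S" unfolding R_def by blast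
      then have "s \<in> carrier G" using gS subgroup.subset[OF subB] by blast
      then show "x \<in> carrier G" using ks b0c by simp
    qed
    show "R \<noteq> {}" using memR[OF subgroup.one_closed[OF gsub]] by blast
    fix x y
    assume x: "x \<in> R"
    then obtain k s where ks: "x = b0 [^] (k::int) \<otimes> s" "s \<in> generate G S" unfolding R_def by blast
    have sB: "s \<in> B" using ks gS by blast
    have sc: "s \<in> carrier G" using sB subgroup.subset[OF subB] by blast
    have pB: "b0 [^] (-k) \<in> B" using subgroup_int_pow_closed[OF subB b0] .
    have isB: "inv s \<in> B" using subgroup.m_inv_closed[OF subB sB] .
    have "inv x = inv s \<otimes> inv (b0 [^] k)" using ks sc b0c by (simp add: inv_mult_group)
    also have "\<dots> = inv s \<otimes> b0 [^] (-k)" using b0c by (simp add: int_pow_neg)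
    also have "\<dots> = b0 [^] (-k) \<otimes> inv s" using comm pB isB by blast
    finally show "inv x \<in> R"
      using memR[OF subgroup.m_inv_closed[OF gsub ks(2)]] by simp
    assume y: "y \<in> R"
    then obtain k' s' where ks': "y = b0 [^] (k'::int) \<otimes> s'" "s' \<in> generate G S" unfolding R_def by blast
    have s'B: "s' \<in> B" using ks' gS by blast
    have s'c: "s' \<in> carrier G" using s'B subgroup.subset[OF subB] by blast
    have pB': "b0 [^] k' \<in> B" using subgroup_int_pow_closed[OF subB b0] .
    have "x \<otimes> y = b0 [^] k \<otimes> (s \<otimes> b0 [^] k') \<otimes> s'" using ks ks' sc s'c b0c by (simp add: m_assoc)
    also have "s \<otimes> b0 [^] k' = b0 [^] k' \<otimes> s" using comm pB' sB by blast
    also have "b0 [^] k \<otimes> (b0 [^] k' \<otimes> s) \<otimes> s' = b0 [^] (k + k') \<otimes> (s \<otimes> s')"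
      using sc s'c b0c by (simp add: m_assoc int_pow_mult)
    finally show "x \<otimes> y \<in> R"
      using memR[OF subgroup.m_closed[OF gsub ks(2) ks'(2)]] by simp
  qed
qed

lemma reduce_one:
  assumes subB: "subgroup B G" and comm: "\<forall>a\<in>B. \<forall>b\<in>B. a \<otimes> b = b \<otimes> a"
    and add: "\<forall>a\<in>B. \<forall>b\<in>B. \<phi> (a \<otimes> b) = \<phi> a + (\<phi> b :: int)"
    and nz: "\<exists>b\<in>B. \<phi> b \<noteq> 0"
  shows "finite S \<Longrightarrow> S \<subseteq> B \<Longrightarrow> generate G S = B \<Longrightarrow>
    \<exists>S'. finite S' \<and> card S' + 1 \<le> card S \<and> S' \<subseteq> B \<and> generate G S' = {b\<in>B. \<phi> b = 0}"
proof (induction "\<Sum>y\<in>S. nat \<bar>\<phi> y\<bar>" arbitrary: S rule: less_induct)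
  case less
  have addI: "\<And>a b. a \<in> B \<Longrightarrow> b \<in> B \<Longrightarrow> \<phi> (a \<otimes> b) = \<phi> a + \<phi> b" using add by simp
  have BG: "B \<subseteq> carrier G" using subgroup.subset[OF subB] .
  have SG: "S \<subseteq> carrier G" using less.prems(2) BG by blast
  note gsub = generate_is_subgroup[OF SG]
  note kersub = ker_subgroup[OF subB add]
  show ?case
  proof (cases "\<exists>s\<in>S. \<exists>t\<in>S. s \<noteq> t \<and> \<phi> s \<noteq> 0 \<and> \<phi> t \<noteq> 0")
    case True
    have "\<exists>s\<in>S. \<exists>t\<in>S. s \<noteq> t \<and> \<phi> s \<noteq> 0 \<and> \<phi> t \<noteq> 0 \<and> \<bar>\<phi> t\<bar> \<le> \<bar>\<phi> s\<bar>"
    proof -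
      obtain s t where "s\<in>S" "t\<in>S" "s \<noteq> t" "\<phi> s \<noteq> 0" "\<phi> t \<noteq> 0" using True by blast
      then show ?thesis by (cases "\<bar>\<phi> t\<bar> \<le> \<bar>\<phi> s\<bar>") (blast, force)
    qed
    then obtain s t where st: "s\<in>S" "t\<in>S" "s \<noteq> t" "\<phi> s \<noteq> 0" "\<phi> t \<noteq> 0"
      and ge: "\<bar>\<phi> t\<bar> \<le> \<bar>\<phi> s\<bar>" by blast
    have sB: "s \<in> B" and tB: "t \<in> B" using st less.prems(2) by auto
    have sc: "s \<in> carrier G" and tc: "t \<in> carrier G" using sB tB BG by auto
    have itB: "inv t \<in> B" using subgroup.m_inv_closed[OF subB tB] .
    define s' where "s' = (if (\<phi> s > 0) = (\<phi> t > 0) then s \<otimes> inv t else s \<otimes> t)"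
    have s'B: "s' \<in> B" unfolding s'_def using subgroup.m_closed[OF subB sB] tB itB by auto
    have phis': "\<phi> s' = (if (\<phi> s > 0) = (\<phi> t > 0) then \<phi> s - \<phi> t else \<phi> s + \<phi> t)"
      unfolding s'_def using addI[OF sB tB] addI[OF sB itB] phi_basic(2)[OF subB add tB] by auto
    have lt: "\<bar>\<phi> s'\<bar> < \<bar>\<phi> s\<bar>" unfolding phis' using st(4,5) ge by auto
    have s_eq: "s = (if (\<phi> s > 0) = (\<phi> t > 0) then s' \<otimes> t else s' \<otimes> inv t)"
      unfolding s'_def using sc tc by (auto simp: m_assoc)
    define S2 where "S2 = insert s' (S - {s})"
    have fin2: "finite S2" using less.prems(1) by (simp add: S2_def)
    have sub2: "S2 \<subseteq> B" using less.prems(2) s'B by (auto simp: S2_def)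
    have s'gen: "s' \<in> generate G S" unfolding s'_def
      using generate.eng[OF generate.incl[OF st(1)] generate.incl[OF st(2)]]
        generate.eng[OF generate.incl[OF st(1)] generate_m_inv_closed[OF SG generate.incl[OF st(2)]]]
      by auto
    have "generate G S2 \<subseteq> generate G S"
      using generate_subgroup_incl[OF _ gsub, of S2] s'gen generate.incl[of _ S G]
      by (auto simp: S2_def)
    moreover have "generate G S \<subseteq> generate G S2"
    proof (rule generate_subgroup_incl)
      show "subgroup (generate G S2) G" using generate_is_subgroup sub2 BG by blast
      show "S \<subseteq> generate G S2"
      proof
        fix y assume y: "y \<in> S"
        show "y \<in> generate G S2"
        proof (cases "y = s")
          case False then show ?thesis using y generate.incl[of y S2 G] by (auto simp: S2_def)
        next
          case True
          have s'2: "s' \<in> generate G S2" using generate.incl[of s' S2 G] by (auto simp: S2_def)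
          have t2: "t \<in> generate G S2" using generate.incl[of t S2 G] st by (auto simp: S2_def)
          have S2G: "S2 \<subseteq> carrier G" using sub2 BG by blast
          show ?thesis unfolding True
            using generate.eng[OF s'2 t2] generate.eng[OF s'2 generate_m_inv_closed[OF S2G t2]]
            by (subst s_eq) auto
        qed
      qed
    qed
    ultimately have gen2: "generate G S2 = B" using less.prems(3) by blast
    have cardle: "card S2 \<le> card S"
    proof -
      have "card S2 \<le> Suc (card (S - {s}))" unfolding S2_def by (rule card_insert_le_m1) simp_all
      also have "\<dots> = card S" using st(1) less.prems(1) card_Suc_Diff1 by metis
      finally show ?thesis .
    qed
    have meas: "(\<Sum>y\<in>S2. nat \<bar>\<phi> y\<bar>) < (\<Sum>y\<in>S. nat \<bar>\<phi> y\<bar>)"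
    proof -
      have "(\<Sum>y\<in>S2. nat \<bar>\<phi> y\<bar>) \<le> nat \<bar>\<phi> s'\<bar> + (\<Sum>y\<in>S - {s}. nat \<bar>\<phi> y\<bar>)"
        unfolding S2_def using less.prems(1) by (simp add: sum.insert_if)
      also have "(\<Sum>y\<in>S - {s}. nat \<bar>\<phi> y\<bar>) = (\<Sum>y\<in>S. nat \<bar>\<phi> y\<bar>) - nat \<bar>\<phi> s\<bar>"
        using sum_diff1_nat[of "\<lambda>y. nat \<bar>\<phi> y\<bar>" S s] st(1) by simp
      also have "nat \<bar>\<phi> s\<bar> \<le> (\<Sum>y\<in>S. nat \<bar>\<phi> y\<bar>)"
        using member_le_sum[of s S "\<lambda>y. nat \<bar>\<phi> y\<bar>"] st(1) less.prems(1) by simp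
      then have "nat \<bar>\<phi> s'\<bar> + ((\<Sum>y\<in>S. nat \<bar>\<phi> y\<bar>) - nat \<bar>\<phi> s\<bar>) < (\<Sum>y\<in>S. nat \<bar>\<phi> y\<bar>)"
        using lt by linarith
      finally show ?thesis .
    qed
    obtain S' where "finite S'" "card S' + 1 \<le> card S2" "S' \<subseteq> B" "generate G S' = {b\<in>B. \<phi> b = 0}"
      using less.hyps[OF meas fin2 sub2 gen2] by blast
    then show ?thesis using cardle by (intro exI[of _ S']) auto
  next
    case False
    have "\<exists>s0\<in>S. \<phi> s0 \<noteq> 0"
    proof (rule ccontr)
      assume "\<not> (\<exists>s0\<in>S. \<phi> s0 \<noteq> 0)"
      then have "S \<subseteq> {b\<in>B. \<phi> b = 0}" using less.prems(2) by auto
      then have "B \<subseteq> {b\<in>B. \<phi> b = 0}" using generate_subgroup_incl[OF _ kersub] less.prems(3) by blast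
      then show False using nz by auto
    qed
    then obtain s0 where s0: "s0 \<in> S" "\<phi> s0 \<noteq> 0" by blast
    define S' where "S' = S - {s0}"
    have zero: "\<forall>y\<in>S'. \<phi> y = 0" using False s0 by (auto simp: S'_def)
    have S'B: "S' \<subseteq> B" using less.prems(2) by (auto simp: S'_def)
    have s0B: "s0 \<in> B" using s0 less.prems(2) by auto
    have Sins: "S = insert s0 S'" using s0 by (auto simp: S'_def)
    have "card S > 0" using s0(1) less.prems(1) card_gt_0_iff by blast
    then have cardS': "card S' + 1 = card S" using s0(1) less.prems(1) by (simp add: S'_def card_Diff_singleton)
    have gS'ker: "generate G S' \<subseteq> {b\<in>B. \<phi> b = 0}"
      using generate_subgroup_incl[OF _ kersub] zero S'B by blast
    have "{b\<in>B. \<phi> b = 0} \<subseteq> generate G S'"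
    proof
      fix b assume b: "b \<in> {b\<in>B. \<phi> b = 0}"
      then have "b \<in> generate G (insert s0 S')" using less.prems(3) Sins by simp
      then obtain k s where ks: "b = s0 [^] (k::int) \<otimes> s" "s \<in> generate G S'"
        using gen_insert[OF subB comm s0B S'B] by blast
      have sker: "s \<in> B" "\<phi> s = 0" using gS'ker ks(2) by auto
      have "\<phi> b = k * \<phi> s0 + \<phi> s"
        unfolding ks(1) using addI[OF subgroup_int_pow_closed[OF subB s0B] sker(1)]
          phi_basic(3)[OF subB add s0B] by simp
      then have "k = 0" using b sker s0 by simp
      then show "b \<in> generate G S'" using ks sker BG by auto
    qed
    then show ?thesis using gS'ker cardS' less.prems(1) S'B
      by (intro exI[of _ S']) (auto simp: S'_def)
  qed
qed

lemma reduce_all: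
  fixes \<kappa> :: "'a \<Rightarrow> nat \<Rightarrow> int"
  assumes "subgroup B G" "\<forall>a\<in>B. \<forall>b\<in>B. a \<otimes> b = b \<otimes> a"
    "\<forall>a\<in>B. \<forall>b\<in>B. \<kappa> (a \<otimes> b) = (\<lambda>j. \<kappa> a j + \<kappa> b j)"
    "\<forall>b\<in>B. \<forall>i\<ge>n. \<kappa> b i = 0"
    "\<forall>i<n. \<exists>b\<in>B. \<kappa> b i \<noteq> 0 \<and> (\<forall>j. j \<noteq> i \<longrightarrow> \<kappa> b j = 0)"
    "finite S" "S \<subseteq> B" "generate G S = B"
  shows "\<exists>S'. finite S' \<and> card S' + n \<le> card S \<and> S' \<subseteq> B \<and> generate G S' = {b\<in>B. \<kappa> b = (\<lambda>j. 0)}"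
  using assms
proof (induction n arbitrary: B S)
  case 0
  have "\<kappa> b = (\<lambda>j. 0)" if "b \<in> B" for b
  proof
    fix j show "\<kappa> b j = 0" using 0(4) that by simp
  qed
  then have "{b\<in>B. \<kappa> b = (\<lambda>j. 0)} = B" by blast
  then show ?case using 0(6,7,8) by (intro exI[of _ S]) simp
next
  case (Suc n)
  define B' where "B' = {b\<in>B. \<kappa> b n = 0}"
  have addn: "\<forall>a\<in>B. \<forall>b\<in>B. \<kappa> (a \<otimes> b) n = \<kappa> a n + \<kappa> b n"
  proof (intro ballI)
    fix a b assume a: "a \<in> B" and b: "b \<in> B"
    show "\<kappa> (a \<otimes> b) n = \<kappa> a n + \<kappa> b n" using bspec[OF bspec[OF Suc.prems(3) a] b] by simp
  qed
  have nz: "\<exists>b\<in>B. \<kappa> b n \<noteq> 0" using Suc.prems(5) by blast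
  have "\<exists>S'. finite S' \<and> card S' + 1 \<le> card S \<and> S' \<subseteq> B \<and> generate G S' = {b\<in>B. \<kappa> b n = 0}"
    by (rule reduce_one[OF Suc.prems(1,2) addn nz Suc.prems(6,7,8)])
  then obtain S1 where S1: "finite S1" "card S1 + 1 \<le> card S" "S1 \<subseteq> B" "generate G S1 = B'"
    unfolding B'_def by blast
  have subB': "subgroup B' G" unfolding B'_def using ker_subgroup[OF Suc.prems(1) addn] .
  have S1B': "S1 \<subseteq> B'" using S1(4) generate.incl[of _ S1 G] by blast
  have "\<exists>S'. finite S' \<and> card S' + n \<le> card S1 \<and> S' \<subseteq> B' \<and> generate G S' = {b\<in>B'. \<kappa> b = (\<lambda>j. 0)}"
  proof (rule Suc.IH[OF subB'])
    show "\<forall>a\<in>B'. \<forall>b\<in>B'. a \<otimes> b = b \<otimes> a" using Suc.prems(2) by (auto simp: B'_def)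
    show "\<forall>a\<in>B'. \<forall>b\<in>B'. \<kappa> (a \<otimes> b) = (\<lambda>j. \<kappa> a j + \<kappa> b j)"
    proof (intro ballI)
      fix a b assume "a \<in> B'" "b \<in> B'"
      then have a: "a \<in> B" and b: "b \<in> B" by (auto simp: B'_def)
      show "\<kappa> (a \<otimes> b) = (\<lambda>j. \<kappa> a j + \<kappa> b j)" using bspec[OF bspec[OF Suc.prems(3) a] b] .
    qed
    show "\<forall>b\<in>B'. \<forall>i\<ge>n. \<kappa> b i = 0"
    proof (intro ballI allI impI)
      fix b i assume "b \<in> B'" "n \<le> i" then show "\<kappa> b i = 0" using Suc.prems(4) by (cases "i = n") (auto simp: B'_def)
    qed
    show "\<forall>i<n. \<exists>b\<in>B'. \<kappa> b i \<noteq> 0 \<and> (\<forall>j. j \<noteq> i \<longrightarrow> \<kappa> b j = 0)"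
    proof (intro allI impI)
      fix i assume i: "i < n"
      then have "i < Suc n" by simp
      from Suc.prems(5)[rule_format, OF this]
      obtain b where "b \<in> B" "\<kappa> b i \<noteq> 0" "\<forall>j. j \<noteq> i \<longrightarrow> \<kappa> b j = 0" by blast
      then show "\<exists>b\<in>B'. \<kappa> b i \<noteq> 0 \<and> (\<forall>j. j \<noteq> i \<longrightarrow> \<kappa> b j = 0)" using i by (auto simp: B'_def)
    qed
    show "finite S1" "S1 \<subseteq> B'" "generate G S1 = B'" using S1 S1B' by auto
  qed
  then obtain S' where S': "finite S'" "card S' + n \<le> card S1" "S' \<subseteq> B'" "generate G S' = {b\<in>B'. \<kappa> b = (\<lambda>j. 0)}" by blast
  have "{b\<in>B'. \<kappa> b = (\<lambda>j. 0)} = {b\<in>B. \<kappa> b = (\<lambda>j. 0)}" by (auto simp: B'_def)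
  then show ?case using S' S1 by (intro exI[of _ S']) (auto simp: B'_def)
qed

end



primrec gp :: "('a, 'b) monoid_scheme \<Rightarrow> (nat \<Rightarrow> 'a) \<Rightarrow> (nat \<Rightarrow> int) \<Rightarrow> nat \<Rightarrow> 'a" where
  "gp G z a 0 = \<one>\<^bsub>G\<^esub>"
| "gp G z a (Suc m) = gp G z a m \<otimes>\<^bsub>G\<^esub> (z m [^]\<^bsub>G\<^esub> a m)"

context group
begin

lemma center_subgroup: "subgroup (group_center G) G"
proof (rule subgroupI)
  show "group_center G \<subseteq> carrier G" by (auto simp: group_center_def)
  show "group_center G \<noteq> {}" by (auto simp: group_center_def intro!: exI[of _ \<one>])
  show "inv a \<in> group_center G" if a: "a \<in> group_center G" for a
  proof -
    have ac: "a \<in> carrier G" and com: "\<forall>g\<in>carrier G. a \<otimes> g = g \<otimes> a" using a by (auto simp: group_center_def)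
    have "inv a \<otimes> g = g \<otimes> inv a" if g: "g \<in> carrier G" for g
    proof -
      have "inv a \<otimes> g = inv a \<otimes> (g \<otimes> a) \<otimes> inv a" using ac g by (simp add: m_assoc)
      also have "g \<otimes> a = a \<otimes> g" using com g by simp
      also have "inv a \<otimes> (a \<otimes> g) \<otimes> inv a = g \<otimes> inv a" using ac g by (simp add: m_assoc[symmetric])
      finally show ?thesis .
    qed
    then show ?thesis using ac by (auto simp: group_center_def)
  qed
  show "a \<otimes> b \<in> group_center G" if "a \<in> group_center G" "b \<in> group_center G" for a b
  proof -
    have ac: "a \<in> carrier G" and coma: "\<forall>g\<in>carrier G. a \<otimes> g = g \<otimes> a"
      and bc: "b \<in> carrier G" and comb: "\<forall>g\<in>carrier G. b \<otimes> g = g \<otimes> b"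
      using that by (auto simp: group_center_def)
    have "a \<otimes> b \<otimes> g = g \<otimes> (a \<otimes> b)" if g: "g \<in> carrier G" for g
    proof -
      have "a \<otimes> b \<otimes> g = a \<otimes> (b \<otimes> g)" using ac bc g by (simp add: m_assoc)
      also have "b \<otimes> g = g \<otimes> b" using comb g by blast
      also have "a \<otimes> (g \<otimes> b) = (a \<otimes> g) \<otimes> b" using ac bc g by (simp add: m_assoc)
      also have "a \<otimes> g = g \<otimes> a" using coma g by blast
      finally show ?thesis using ac bc g by (simp add: m_assoc)
    qed
    then show ?thesis using ac bc by (auto simp: group_center_def)
  qed
qed

lemma center_comm: "\<forall>a\<in>group_center G. \<forall>b\<in>group_center G. a \<otimes> b = b \<otimes> a"
proof (intro ballI)
  fix a b assume a: "a \<in> group_center G" and b: "b \<in> group_center G"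
  have bc: "b \<in> carrier G" using b unfolding group_center_def by blast
  have "\<forall>g\<in>carrier G. a \<otimes> g = g \<otimes> a" using a unfolding group_center_def by blast
  then show "a \<otimes> b = b \<otimes> a" using bc by blast
qed

lemma commutes_generate:
  assumes zc: "z \<in> carrier G" and S: "S \<subseteq> carrier G" and com: "\<forall>s\<in>S. z \<otimes> s = s \<otimes> z"
    and h: "h \<in> generate G S"
  shows "z \<otimes> h = h \<otimes> z"
  using h
proof (induction rule: generate.induct)
  case one then show ?case using zc by simp
next
  case (incl h) then show ?case using com by blast
next
  case (inv h)
  have hc: "h \<in> carrier G" using inv S by blast
  have e: "z \<otimes> h = h \<otimes> z" using inv com by blast
  have "z \<otimes> inv h = inv h \<otimes> (h \<otimes> z) \<otimes> inv h" using hc zc by (simp add: m_assoc[symmetric])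
  also have "\<dots> = inv h \<otimes> (z \<otimes> h) \<otimes> inv h" using e by simp
  also have "\<dots> = inv h \<otimes> z" using hc zc by (simp add: m_assoc)
  finally show ?case .
next
  case (eng h1 h2)
  have h1c: "h1 \<in> carrier G" using eng.hyps(1) generate_in_carrier[OF S] by blast
  have h2c: "h2 \<in> carrier G" using eng.hyps(2) generate_in_carrier[OF S] by blast
  have "z \<otimes> (h1 \<otimes> h2) = (z \<otimes> h1) \<otimes> h2" using h1c h2c zc by (simp add: m_assoc)
  also have "\<dots> = (h1 \<otimes> z) \<otimes> h2" by (simp only: eng.IH(1))
  also have "\<dots> = h1 \<otimes> (z \<otimes> h2)" using h1c h2c zc by (simp add: m_assoc)
  also have "\<dots> = h1 \<otimes> (h2 \<otimes> z)" by (simp only: eng.IH(2))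
  also have "\<dots> = (h1 \<otimes> h2) \<otimes> z" using h1c h2c zc by (simp add: m_assoc)
  finally show ?case .
qed

lemma cancel1: "x \<in> carrier G \<Longrightarrow> y \<in> carrier G \<Longrightarrow> x \<otimes> (inv x \<otimes> y) = y"
  by (simp add: m_assoc[symmetric])

lemma cancel2: "x \<in> carrier G \<Longrightarrow> y \<in> carrier G \<Longrightarrow> inv x \<otimes> (x \<otimes> y) = y"
  by (simp add: m_assoc[symmetric])

lemma pigeon_commute:
  assumes fin: "finite (derived G (carrier G))" and gc: "g \<in> carrier G" and yc: "y \<in> carrier G"
  shows "\<exists>d::nat. d > 0 \<and> g [^] d \<otimes> y = y \<otimes> g [^] d"
proof -
  define C where "C = derived G (carrier G)"
  define f where "f m = inv (g [^] (m::nat)) \<otimes> y \<otimes> g [^] m" for m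
  have CG: "C \<subseteq> carrier G" unfolding C_def using derived_in_carrier by simp
  have "f m \<in> C #> y" for m
  proof -
    have ic: "inv (g [^] m) \<in> carrier G" using gc by simp
    have "inv (g [^] m) \<otimes> y \<otimes> inv (inv (g [^] m)) \<otimes> inv y \<in> derived_set G (carrier G)"
      by (rule UN_I[OF ic], rule UN_I[OF yc]) simp
    then have "inv (g [^] m) \<otimes> y \<otimes> g [^] m \<otimes> inv y \<in> derived_set G (carrier G)"
      using gc by simp
    then have c: "inv (g [^] m) \<otimes> y \<otimes> g [^] m \<otimes> inv y \<in> C"
      unfolding C_def derived_def by (rule generate.incl)
    have "f m = (inv (g [^] m) \<otimes> y \<otimes> g [^] m \<otimes> inv y) \<otimes> y"
      unfolding f_def using gc yc by (simp add: m_assoc)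
    then show ?thesis using rcosI[OF c CG yc] by simp
  qed
  then have "range f \<subseteq> C #> y" by blast
  moreover have "finite (C #> y)" using fin unfolding C_def r_coset_def by simp
  ultimately have "finite (range f)" using finite_subset by blast
  then have "\<not> inj f" using finite_imageD infinite_UNIV_nat by blast
  then obtain m1 m2 where m: "m1 \<noteq> m2" "f m1 = f m2" unfolding inj_def by blast
  have "\<exists>a b. a < b \<and> f a = f b"
  proof (cases "m1 < m2")
    case True then show ?thesis using m by blast
  next
    case False then have "m2 < m1" using m(1) by simp
    then show ?thesis using m(2)[symmetric] by blast
  qed
  then obtain a b where ab: "a < b" "f a = f b" by blast
  define d where "d = b - a"
  have dpos: "d > 0" using ab by (simp add: d_def)
  define A where "A = g [^] a"
  define D where "D = g [^] d"
  have Ac: "A \<in> carrier G" and Dc: "D \<in> carrier G" using gc by (auto simp: A_def D_def)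
  have AD: "A \<otimes> D = D \<otimes> A" unfolding A_def D_def using nat_pow_comm[OF gc] .
  have gb: "g [^] b = A \<otimes> D" unfolding A_def D_def using ab nat_pow_mult[OF gc, of a d] by (simp add: d_def)
  define F where "F = f a"
  have Fc: "F \<in> carrier G" unfolding F_def f_def using gc yc by simp
  have "F = f b" using ab(2) F_def by simp
  also have "\<dots> = inv (g [^] b) \<otimes> y \<otimes> g [^] b" by (simp add: f_def)
  also have "\<dots> = inv (A \<otimes> D) \<otimes> y \<otimes> (A \<otimes> D)" by (simp only: gb)
  also have "\<dots> = inv D \<otimes> (inv A \<otimes> y \<otimes> A) \<otimes> D" using Ac Dc yc by (simp add: inv_mult_group m_assoc)
  also have "inv A \<otimes> y \<otimes> A = F" unfolding F_def f_def A_def ..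
  finally have FD: "F = inv D \<otimes> F \<otimes> D" .
  have DF: "D \<otimes> F = F \<otimes> D"
  proof -
    have "D \<otimes> F = D \<otimes> (inv D \<otimes> F \<otimes> D)" using FD by (rule arg_cong)
    also have "\<dots> = F \<otimes> D" using Dc Fc by (simp add: m_assoc[symmetric])
    finally show ?thesis .
  qed
  have yA: "y = A \<otimes> F \<otimes> inv A" unfolding F_def f_def A_def[symmetric] using Ac yc by (simp add: m_assoc cancel1)
  have AiD: "inv A \<otimes> D = D \<otimes> inv A"
  proof -
    have "inv A \<otimes> D = inv A \<otimes> (D \<otimes> A) \<otimes> inv A" using Ac Dc by (simp add: m_assoc)
    also have "\<dots> = inv A \<otimes> (A \<otimes> D) \<otimes> inv A" by (simp only: AD)
    also have "\<dots> = D \<otimes> inv A" using Ac Dc by (simp add: m_assoc[symmetric])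
    finally show ?thesis .
  qed
  have "D \<otimes> y = D \<otimes> (A \<otimes> F \<otimes> inv A)" using yA by simp
  also have "\<dots> = (D \<otimes> A) \<otimes> F \<otimes> inv A" using Ac Dc Fc by (simp add: m_assoc)
  also have "\<dots> = (A \<otimes> D) \<otimes> F \<otimes> inv A" by (simp only: AD)
  also have "\<dots> = A \<otimes> (D \<otimes> F) \<otimes> inv A" using Ac Dc Fc by (simp add: m_assoc)
  also have "\<dots> = A \<otimes> (F \<otimes> D) \<otimes> inv A" by (simp only: DF)
  also have "\<dots> = A \<otimes> F \<otimes> (D \<otimes> inv A)" using Ac Dc Fc by (simp add: m_assoc)
  also have "\<dots> = A \<otimes> F \<otimes> (inv A \<otimes> D)" by (simp only: AiD)
  also have "\<dots> = A \<otimes> F \<otimes> inv A \<otimes> D" using Ac Dc Fc by (simp add: m_assoc)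
  also have "\<dots> = y \<otimes> D" by (simp only: yA[symmetric])
  finally show ?thesis using dpos unfolding D_def by blast
qed


lemma gp_closed: "subgroup B G \<Longrightarrow> (\<forall>i<m. z i \<in> B) \<Longrightarrow> gp G z a m \<in> B"
proof (induction m)
  case 0 then show ?case using subgroup.one_closed by simp
next
  case (Suc m)
  have "gp G z a m \<in> B" using Suc by simp
  moreover have "z m [^] a m \<in> B" using subgroup_int_pow_closed[OF Suc.prems(1)] Suc.prems(2) by simp
  ultimately show ?case using subgroup.m_closed[OF Suc.prems(1)] by simp
qed

lemma gp_gen: "S \<subseteq> carrier G \<Longrightarrow> (\<forall>i<m. z i \<in> S) \<Longrightarrow> gp G z a m \<in> generate G S"
proof (induction m)
  case 0 then show ?case using generate.one by simp
next
  case (Suc m)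
  note gsub = generate_is_subgroup[OF Suc.prems(1)]
  have "gp G z a m \<in> generate G S" using Suc by simp
  moreover have "z m \<in> generate G S" using Suc.prems(2) generate.incl[of "z m" S G] by simp
  then have "z m [^] a m \<in> generate G S" using subgroup_int_pow_closed[OF gsub] by simp
  ultimately show ?case using subgroup.m_closed[OF gsub] by simp
qed

lemma gp_cong: "(\<forall>i<m. a i = b i) \<Longrightarrow> gp G z a m = gp G z b m"
  by (induction m) auto

lemma gp_zero: "gp G z (\<lambda>i. 0) m = \<one>"
  by (induction m) auto

lemma gp_add:
  assumes subB: "subgroup B G" and comm: "\<forall>x\<in>B. \<forall>y\<in>B. x \<otimes> y = y \<otimes> x"
  shows "(\<forall>i<m. z i \<in> B) \<Longrightarrow> gp G z (\<lambda>i. a i + b i) m = gp G z a m \<otimes> gp G z b m"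
proof (induction m)
  case 0 then show ?case by simp
next
  case (Suc m)
  define Pp where "Pp = gp G z a m"
  define Qq where "Qq = gp G z b m"
  define Ux where "Ux = z m [^] a m"
  define Wy where "Wy = z m [^] b m"
  have PB: "Pp \<in> B" and QB: "Qq \<in> B" unfolding Pp_def Qq_def using gp_closed[OF subB] Suc.prems by auto
  have XB: "Ux \<in> B" and YB: "Wy \<in> B" unfolding Ux_def Wy_def using subgroup_int_pow_closed[OF subB] Suc.prems by auto
  have BG: "B \<subseteq> carrier G" using subgroup.subset[OF subB] .
  have c: "Pp \<in> carrier G" "Qq \<in> carrier G" "Ux \<in> carrier G" "Wy \<in> carrier G" using PB QB XB YB BG by auto
  have zc: "z m \<in> carrier G" using Suc.prems BG by auto
  have QX: "Qq \<otimes> Ux = Ux \<otimes> Qq" using comm QB XB by blast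
  have "gp G z (\<lambda>i. a i + b i) (Suc m) = (Pp \<otimes> Qq) \<otimes> (z m [^] (a m + b m))"
    using Suc by (simp add: Pp_def Qq_def)
  also have "z m [^] (a m + b m) = Ux \<otimes> Wy" unfolding Ux_def Wy_def using int_pow_mult[OF zc] .
  also have "(Pp \<otimes> Qq) \<otimes> (Ux \<otimes> Wy) = Pp \<otimes> (Qq \<otimes> Ux) \<otimes> Wy" using c by (simp add: m_assoc)
  also have "\<dots> = Pp \<otimes> (Ux \<otimes> Qq) \<otimes> Wy" by (simp only: QX)
  also have "\<dots> = (Pp \<otimes> Ux) \<otimes> (Qq \<otimes> Wy)" using c by (simp add: m_assoc)
  finally show ?case by (simp add: Pp_def Qq_def Ux_def Wy_def)
qed

lemma gp_phi:
  assumes subB: "subgroup B G" and add: "\<forall>x\<in>B. \<forall>y\<in>B. \<phi> (x \<otimes> y) = \<phi> x + (\<phi> y :: int)"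
  shows "(\<forall>i<m. z i \<in> B) \<Longrightarrow> \<phi> (gp G z a m) = (\<Sum>i<m. a i * \<phi> (z i))"
proof (induction m)
  case 0 then show ?case using phi_basic(1)[OF subB add] by simp
next
  case (Suc m)
  have "gp G z a m \<in> B" using gp_closed[OF subB] Suc.prems by simp
  moreover have zB: "z m \<in> B" using Suc.prems by simp
  moreover have "z m [^] a m \<in> B" using subgroup_int_pow_closed[OF subB zB] .
  ultimately have "\<phi> (gp G z a (Suc m)) = \<phi> (gp G z a m) + \<phi> (z m [^] a m)"
    using add by simp
  also have "\<phi> (z m [^] a m) = a m * \<phi> (z m)" using phi_basic(3)[OF subB add zB] .
  finally show ?case using Suc by simp
qed

end



theorem proposition5:
  fixes G (structure) and x :: "nat \<Rightarrow> 'a" and n :: nat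
  assumes "group G"
    and "\<forall>i<n. x i \<in> carrier G"
    and "generate G (x ` {..<n}) = carrier G"
    and "finite (derived G (carrier G))"
    and "free_abelian_basis (G Mod (derived G (carrier G)))
           (\<lambda>i. derived G (carrier G) #> x i) n"
  shows "(\<exists>Zt. subgroup Zt G \<and> Zt \<subseteq> group_center G
           \<and> G\<lparr>carrier := Zt\<rparr> \<cong> free_Abelian_group {..<n}
           \<and> Zt \<inter> (group_center G \<inter> derived G (carrier G)) = {\<one>}
           \<and> Zt <#> (group_center G \<inter> derived G (carrier G)) = group_center G)
         \<and> group_rank G (group_center G)
           = n + group_rank G (group_center G \<inter> derived G (carrier G))"
proof -
  interpret group G by (rule assms(1))
  define C where "C = derived G (carrier G)"
  define Q where "Q = G Mod C"
  define bq where "bq = (\<lambda>i. C #> x i)"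
  define F where "F k = finprod Q (\<lambda>i. bq i [^]\<^bsub>Q\<^esub> (k i :: int)) {..<n}" for k
  have fab: "free_abelian_basis Q bq n" using assms(5) by (simp add: Q_def C_def bq_def)
  then have cQ: "comm_group Q" and bqc: "\<forall>i<n. bq i \<in> carrier Q"
    and uniq: "\<forall>y\<in>carrier Q. \<exists>!k. (\<forall>i\<ge>n. k i = 0) \<and> y = F k"
    unfolding free_abelian_basis_def F_def by auto
  interpret Q: comm_group Q by (rule cQ)
  have Cnorm: "C \<lhd> G" unfolding C_def by (rule derived_self_is_normal)
  have Csub: "subgroup C G" using normal_imp_subgroup[OF Cnorm] .
  have CG: "C \<subseteq> carrier G" using subgroup.subset[OF Csub] .
  have finC: "finite C" using assms(4) by (simp add: C_def)
  have cosQ: "C #> g \<in> carrier Q" if "g \<in> carrier G" for g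
    using that by (simp add: Q_def carrier_FactGroup)
  have multQ: "(C #> g) \<otimes>\<^bsub>Q\<^esub> (C #> h) = C #> (g \<otimes> h)" if "g \<in> carrier G" "h \<in> carrier G" for g h
    using normal.rcos_sum[OF Cnorm that] by (simp add: Q_def)
  have oneQ: "\<one>\<^bsub>Q\<^esub> = C" by (simp add: Q_def)
  have Fc: "F k \<in> carrier Q" for k
    unfolding F_def using bqc by (intro Q.finprod_closed) auto
  have Fadd: "F (\<lambda>i. k1 i + k2 i) = F k1 \<otimes>\<^bsub>Q\<^esub> F k2" for k1 k2
  proof -
    have "F (\<lambda>i. k1 i + k2 i) = finprod Q (\<lambda>i. bq i [^]\<^bsub>Q\<^esub> k1 i \<otimes>\<^bsub>Q\<^esub> bq i [^]\<^bsub>Q\<^esub> k2 i) {..<n}"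
      unfolding F_def using bqc by (intro Q.finprod_cong') (auto simp: Q.int_pow_mult)
    also have "\<dots> = F k1 \<otimes>\<^bsub>Q\<^esub> F k2"
      unfolding F_def using bqc by (intro Q.finprod_multf) auto
    finally show ?thesis .
  qed
  have F0: "F (\<lambda>i. 0) = C" unfolding F_def oneQ[symmetric] by simp
  define \<kappa> where "\<kappa> g = (THE k. (\<forall>i\<ge>n. k i = 0) \<and> C #> g = F k)" for g
  have \<kappa>1: "(\<forall>i\<ge>n. \<kappa> g i = 0) \<and> C #> g = F (\<kappa> g)" if "g \<in> carrier G" for g
    unfolding \<kappa>_def using theI'[OF bspec[OF uniq cosQ[OF that]]] by simp
  have \<kappa>u: "\<kappa> g = k" if "g \<in> carrier G" "\<forall>i\<ge>n. k i = 0" "C #> g = F k" for g k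
    unfolding \<kappa>_def using the1_equality[OF bspec[OF uniq cosQ[OF that(1)]]] that(2,3) by simp
  have \<kappa>add: "\<kappa> (g \<otimes> h) = (\<lambda>j. \<kappa> g j + \<kappa> h j)" if g: "g \<in> carrier G" and h: "h \<in> carrier G" for g h
  proof (rule \<kappa>u)
    show "g \<otimes> h \<in> carrier G" using g h by simp
    show "\<forall>i\<ge>n. \<kappa> g i + \<kappa> h i = 0" using \<kappa>1[OF g] \<kappa>1[OF h] by simp
    have "C #> (g \<otimes> h) = (C #> g) \<otimes>\<^bsub>Q\<^esub> (C #> h)" using multQ[OF g h] by simp
    also have "\<dots> = F (\<kappa> g) \<otimes>\<^bsub>Q\<^esub> F (\<kappa> h)" using \<kappa>1[OF g] \<kappa>1[OF h] by simp
    also have "\<dots> = F (\<lambda>j. \<kappa> g j + \<kappa> h j)" using Fadd by simp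
    finally show "C #> (g \<otimes> h) = F (\<lambda>j. \<kappa> g j + \<kappa> h j)" .
  qed
  have \<kappa>C: "\<kappa> g = (\<lambda>j. 0) \<longleftrightarrow> g \<in> C" if g: "g \<in> carrier G" for g
  proof
    assume "\<kappa> g = (\<lambda>j. 0)"
    then have "C #> g = C" using \<kappa>1[OF g] F0 by simp
    then show "g \<in> C" using coset_join1[OF _ g Csub] by simp
  next
    assume "g \<in> C"
    then have "C #> g = C" using coset_join2[OF g Csub] by simp
    then show "\<kappa> g = (\<lambda>j. 0)" using \<kappa>u[OF g] F0 by simp
  qed
  have \<kappa>e: "\<exists>g\<in>carrier G. \<kappa> g = (\<lambda>j. if j = i then 1 else 0)" if i: "i < n" for i
  proof -
    define e where "e = (\<lambda>j::nat. if j = i then 1 else (0::int))"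
    have "F e \<in> (\<lambda>g. C #> g) ` carrier G" using Fc[of e] by (simp add: Q_def carrier_FactGroup)
    then obtain g where g: "g \<in> carrier G" "F e = C #> g" by blast
    have "\<kappa> g = e" using \<kappa>u[OF g(1)] g(2) i by (simp add: e_def)
    then show ?thesis using g(1) unfolding e_def by blast
  qed
  define Z where "Z = group_center G"
  have Zsub: "subgroup Z G" unfolding Z_def by (rule center_subgroup)
  have Zcomm: "\<forall>a\<in>Z. \<forall>b\<in>Z. a \<otimes> b = b \<otimes> a" unfolding Z_def by (rule center_comm)
  have ZG: "Z \<subseteq> carrier G" using subgroup.subset[OF Zsub] .
  have \<kappa>Zadd: "\<forall>a\<in>Z. \<forall>b\<in>Z. \<kappa> (a \<otimes> b) = (\<lambda>j. \<kappa> a j + \<kappa> b j)" using \<kappa>add ZG by blast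
  have \<kappa>coord: "\<forall>a\<in>carrier G. \<forall>b\<in>carrier G. \<kappa> (a \<otimes> b) j = \<kappa> a j + \<kappa> b j" for j using \<kappa>add by simp
  have \<kappa>pow: "\<kappa> (g [^] (N::nat)) = (\<lambda>j. int N * \<kappa> g j)" if g: "g \<in> carrier G" for g N
  proof
    fix j
    have "\<kappa> (g [^] (int N)) j = int N * \<kappa> g j"
      using phi_basic(3)[OF subgroup_self \<kappa>coord[of j] g] .
    then show "\<kappa> (g [^] N) j = int N * \<kappa> g j" by (simp add: int_pow_int)
  qed
  have \<kappa>inv: "\<kappa> (inv g) = (\<lambda>j. - \<kappa> g j)" if g: "g \<in> carrier G" for g
  proof
    fix j show "\<kappa> (inv g) j = - \<kappa> g j" using phi_basic(2)[OF subgroup_self \<kappa>coord[of j] g] .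
  qed
  have \<kappa>one: "\<kappa> \<one> = (\<lambda>j. 0)" using \<kappa>C[of \<one>] subgroup.one_closed[OF Csub] by simp
  have centralN: "\<exists>b\<in>Z. \<exists>N::nat. N > 0 \<and> \<kappa> b = (\<lambda>j. if j = i then int N else 0)" if i: "i < n" for i
  proof -
    obtain g where g: "g \<in> carrier G" "\<kappa> g = (\<lambda>j. if j = i then 1 else 0)" using \<kappa>e[OF i] by blast
    have "\<forall>j. \<exists>d::nat. j < n \<longrightarrow> d > 0 \<and> g [^] d \<otimes> x j = x j \<otimes> g [^] d"
      using pigeon_commute[OF assms(4) g(1)] assms(2) by blast
    then obtain d :: "nat \<Rightarrow> nat" where d: "\<forall>j. j < n \<longrightarrow> d j > 0 \<and> g [^] d j \<otimes> x j = x j \<otimes> g [^] d j"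
      by metis
    define N where "N = (\<Prod>j<n. d j)"
    have Npos: "N > 0" unfolding N_def using d by (simp add: prod_pos)
    have gNc: "g [^] N \<in> carrier G" using g by simp
    have comx: "\<forall>s\<in>x ` {..<n}. g [^] N \<otimes> s = s \<otimes> g [^] N"
    proof
      fix s assume "s \<in> x ` {..<n}"
      then obtain j where j: "j < n" "s = x j" by blast
      have "d j dvd N" unfolding N_def using j(1) by (intro dvd_prodI) auto
      then obtain c where c: "N = d j * c" by blast
      have xj: "x j \<in> carrier G" using assms(2) j(1) by blast
      have "(g [^] d j) [^] c \<otimes> x j = x j \<otimes> (g [^] d j) [^] c"
        using group_commutes_pow[of "g [^] d j" "x j" c] d j(1) g(1) xj by simp
      then show "g [^] N \<otimes> s = s \<otimes> g [^] N" using j(2) c nat_pow_pow[OF g(1)] by simp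
    qed
    have "g [^] N \<otimes> h = h \<otimes> g [^] N" if h: "h \<in> carrier G" for h
    proof (rule commutes_generate[OF gNc _ comx])
      show "x ` {..<n} \<subseteq> carrier G" using assms(2) by blast
      show "h \<in> generate G (x ` {..<n})" using assms(3) h by simp
    qed
    then have "g [^] N \<in> Z" using gNc by (simp add: Z_def group_center_def)
    moreover have "\<kappa> (g [^] N) = (\<lambda>j. if j = i then int N else 0)" using \<kappa>pow[OF g(1)] g(2) by auto
    ultimately show ?thesis using Npos by blast
  qed
  define L where "L = \<kappa> ` Z"
  have "\<exists>v. (\<forall>i<n. v i \<in> L) \<and> (\<forall>w\<in>L. \<exists>a. w = lc n a v)
             \<and> (\<forall>a b. lc n a v = lc n b v \<longrightarrow> (\<forall>i<n. a i = b i))"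
  proof (rule lattice_basis)
    have "\<kappa> \<one> \<in> \<kappa> ` Z" by (rule imageI[OF subgroup.one_closed[OF Zsub]])
    then show "(\<lambda>j. 0) \<in> L" unfolding L_def \<kappa>one .
    show "\<forall>u\<in>L. \<forall>w\<in>L. (\<lambda>j. u j + w j) \<in> L"
    proof (intro ballI)
      fix u w assume "u \<in> L" "w \<in> L"
      then obtain a b where ab: "a \<in> Z" "b \<in> Z" "u = \<kappa> a" "w = \<kappa> b" unfolding L_def by blast
      have "\<kappa> (a \<otimes> b) = (\<lambda>j. \<kappa> a j + \<kappa> b j)" using bspec[OF bspec[OF \<kappa>Zadd ab(1)] ab(2)] .
      then have "(\<lambda>j. u j + w j) = \<kappa> (a \<otimes> b)" using ab(3,4) by simp
      then show "(\<lambda>j. u j + w j) \<in> L" unfolding L_def using subgroup.m_closed[OF Zsub ab(1,2)] by simp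
    qed
    show "\<forall>u\<in>L. (\<lambda>j. - u j) \<in> L"
    proof
      fix u assume "u \<in> L"
      then obtain a where a: "a \<in> Z" "u = \<kappa> a" unfolding L_def by blast
      have "a \<in> carrier G" using a(1) ZG by blast
      then have "(\<lambda>j. - u j) = \<kappa> (inv a)" using \<kappa>inv a(2) by simp
      then show "(\<lambda>j. - u j) \<in> L" unfolding L_def using subgroup.m_inv_closed[OF Zsub a(1)] by simp
    qed
    show "\<forall>u\<in>L. \<forall>i\<ge>n. u i = 0"
    proof (intro ballI allI impI)
      fix u i assume "u \<in> L" "n \<le> i"
      then obtain a where a: "a \<in> Z" "u = \<kappa> a" unfolding L_def by blast
      have "a \<in> carrier G" using a(1) ZG by blast
      then show "u i = 0" using \<kappa>1 a(2) \<open>n \<le> i\<close> by simp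
    qed
    show "\<forall>i<n. \<exists>N. N \<noteq> 0 \<and> (\<lambda>j. if j = i then N else 0) \<in> L"
    proof (intro allI impI)
      fix i assume "i < n"
      then obtain b N where bN: "b \<in> Z" "N > 0" "\<kappa> b = (\<lambda>j. if j = i then int N else 0)" using centralN by blast
      have "\<kappa> b \<in> L" unfolding L_def by (rule imageI[OF bN(1)])
      then have "(\<lambda>j. if j = i then int N else 0) \<in> L" using bN(3) by simp
      then show "\<exists>N. N \<noteq> 0 \<and> (\<lambda>j. if j = i then N else 0) \<in> L" using bN(2)
        by (intro exI[of _ "int N"]) simp
    qed
  qed
  then obtain v where vv: "(\<forall>i<n. v i \<in> L) \<and> (\<forall>w\<in>L. \<exists>a. w = lc n a v)
             \<and> (\<forall>a b. lc n a v = lc n b v \<longrightarrow> (\<forall>i<n. a i = b i))" by (rule exE)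
  have vL: "\<forall>i<n. v i \<in> L" using vv by (rule conjunct1)
  have vspan: "\<forall>w\<in>L. \<exists>a. w = lc n a v" using vv by simp
  have vind: "\<forall>a b. lc n a v = lc n b v \<longrightarrow> (\<forall>i<n. a i = b i)" using vv by simp
  have "\<forall>i. \<exists>b. i < n \<longrightarrow> b \<in> Z \<and> \<kappa> b = v i"
  proof
    fix i show "\<exists>b. i < n \<longrightarrow> b \<in> Z \<and> \<kappa> b = v i"
    proof (cases "i < n")
      case True
      then have "v i \<in> \<kappa> ` Z" using vL unfolding L_def by simp
      then obtain b where "b \<in> Z" "v i = \<kappa> b" by (rule imageE)
      then show ?thesis by auto
    qed simp
  qed
  from choice[OF this] obtain z where z: "\<forall>i. i < n \<longrightarrow> z i \<in> Z \<and> \<kappa> (z i) = v i" by (rule exE)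
  have zZ: "\<forall>i<n. z i \<in> Z" using z by blast
  have \<kappa>gp: "\<kappa> (gp G z a n) = lc n a v" for a
  proof
    fix j
    have add_j: "\<forall>x\<in>Z. \<forall>y\<in>Z. \<kappa> (x \<otimes> y) j = \<kappa> x j + \<kappa> y j" using \<kappa>Zadd by simp
    have "\<kappa> (gp G z a n) j = (\<Sum>i<n. a i * \<kappa> (z i) j)" using gp_phi[OF Zsub add_j zZ] .
    also have "\<dots> = lc n a v j" unfolding lc_def using z by (intro sum.cong) auto
    finally show "\<kappa> (gp G z a n) j = lc n a v j" .
  qed
  have gpZ: "gp G z a n \<in> Z" for a using gp_closed[OF Zsub zZ] .
  have gpadd: "gp G z (\<lambda>i. a i + b i) n = gp G z a n \<otimes> gp G z b n" for a b
    using gp_add[OF Zsub Zcomm zZ] .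
  have gpinv: "inv (gp G z a n) = gp G z (\<lambda>i. - a i) n" for a
  proof (rule inv_equality)
    have "gp G z (\<lambda>i. - a i) n \<otimes> gp G z a n = gp G z (\<lambda>i. - a i + a i) n" by (rule gpadd[of "\<lambda>i. - a i" a, symmetric])
    also have "\<dots> = \<one>" using gp_zero by simp
    finally show "gp G z (\<lambda>i. - a i) n \<otimes> gp G z a n = \<one>" .
    show "gp G z a n \<in> carrier G" "gp G z (\<lambda>i. - a i) n \<in> carrier G" using gpZ ZG by auto
  qed
  define Zt where "Zt = range (\<lambda>a. gp G z a n)"
  have ZtZ: "Zt \<subseteq> Z" unfolding Zt_def using gpZ by blast
  have Ztsub: "subgroup Zt G"
  proof (rule subgroupI)
    show "Zt \<subseteq> carrier G" using ZtZ ZG by blast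
    show "Zt \<noteq> {}" unfolding Zt_def by blast
    show "inv h \<in> Zt" if "h \<in> Zt" for h using that gpinv unfolding Zt_def by auto
    show "h1 \<otimes> h2 \<in> Zt" if "h1 \<in> Zt" "h2 \<in> Zt" for h1 h2
      using that gpadd unfolding Zt_def by (auto simp: image_iff) (metis gpadd)
  qed
  define \<psi> where "\<psi> p = gp G z (poly_mapping.lookup p) n" for p :: "nat \<Rightarrow>\<^sub>0 int"
  have hom: "\<psi> \<in> hom (free_Abelian_group {..<n}) (G\<lparr>carrier := Zt\<rparr>)"
    unfolding hom_def
  proof (intro CollectI conjI ballI Pi_I)
    fix p show "\<psi> p \<in> carrier (G\<lparr>carrier := Zt\<rparr>)" by (simp add: \<psi>_def Zt_def)
  next
    fix p q :: "nat \<Rightarrow>\<^sub>0 int"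
    have "poly_mapping.lookup (p + q) = (\<lambda>i. poly_mapping.lookup p i + poly_mapping.lookup q i)" by (rule ext) (simp add: Poly_Mapping.lookup_add)
    then show "\<psi> (p \<otimes>\<^bsub>free_Abelian_group {..<n}\<^esub> q) = \<psi> p \<otimes>\<^bsub>G\<lparr>carrier := Zt\<rparr>\<^esub> \<psi> q"
      by (simp add: \<psi>_def gpadd)
  qed
  have inj: "inj_on \<psi> (carrier (free_Abelian_group {..<n}))"
  proof (rule inj_onI)
    fix p q assume p: "p \<in> carrier (free_Abelian_group {..<n})" and q: "q \<in> carrier (free_Abelian_group {..<n})"
      and eq: "\<psi> p = \<psi> q"
    have "lc n (poly_mapping.lookup p) v = lc n (poly_mapping.lookup q) v" using arg_cong[OF eq, of \<kappa>] \<kappa>gp by (simp add: \<psi>_def)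
    then have lt: "\<forall>i<n. poly_mapping.lookup p i = poly_mapping.lookup q i"
      using spec[OF spec[OF vind, of "poly_mapping.lookup p"], of "poly_mapping.lookup q"] by simp
    have kp: "Poly_Mapping.keys p \<subseteq> {..<n}" and kq: "Poly_Mapping.keys q \<subseteq> {..<n}" using p q by auto
    show "p = q"
    proof (rule poly_mapping_eqI)
      fix i show "poly_mapping.lookup p i = poly_mapping.lookup q i"
      proof (cases "i < n")
        case True then show ?thesis using lt by simp
      next
        case False
        then have "i \<notin> Poly_Mapping.keys p" "i \<notin> Poly_Mapping.keys q" using kp kq by auto
        then show ?thesis by (simp add: in_keys_iff)
      qed
    qed
  qed
  have img: "\<psi> ` carrier (free_Abelian_group {..<n}) = Zt"
  proof
    show "\<psi> ` carrier (free_Abelian_group {..<n}) \<subseteq> Zt" by (auto simp: \<psi>_def Zt_def)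
    show "Zt \<subseteq> \<psi> ` carrier (free_Abelian_group {..<n})"
    proof
      fix h assume "h \<in> Zt"
      then obtain a where a: "h = gp G z a n" unfolding Zt_def by blast
      define f where "f = (\<lambda>i. if i < n then a i else 0)"
      have "{i. f i \<noteq> 0} \<subseteq> {..<n}" by (auto simp: f_def split: if_splits)
      then have finf: "finite {i. f i \<noteq> 0}" using finite_subset by blast
      define p where "p = Abs_poly_mapping f"
      have lp: "poly_mapping.lookup p = f" unfolding p_def using finf by simp
      have "Poly_Mapping.keys p \<subseteq> {..<n}" by (auto simp: in_keys_iff lp f_def split: if_splits)
      then have pc: "p \<in> carrier (free_Abelian_group {..<n})" by simp
      have "\<psi> p = h" unfolding \<psi>_def lp a by (rule gp_cong) (simp add: f_def)
      then show "h \<in> \<psi> ` carrier (free_Abelian_group {..<n})" using pc by blast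
    qed
  qed
  have "\<psi> \<in> iso (free_Abelian_group {..<n}) (G\<lparr>carrier := Zt\<rparr>)"
    by (rule isoI[OF hom]) (simp add: bij_betw_def inj img)
  then have "free_Abelian_group {..<n} \<cong> G\<lparr>carrier := Zt\<rparr>" by (rule is_isoI)
  then have isoZt: "G\<lparr>carrier := Zt\<rparr> \<cong> free_Abelian_group {..<n}"
    by (rule group.iso_sym[OF group_free_Abelian_group])
  have int1: "Zt \<inter> (Z \<inter> C) = {\<one>}"
  proof
    show "Zt \<inter> (Z \<inter> C) \<subseteq> {\<one>}"
    proof
      fix h assume h: "h \<in> Zt \<inter> (Z \<inter> C)"
      then obtain a where a: "h = gp G z a n" unfolding Zt_def by blast
      have "h \<in> carrier G" "h \<in> C" using h ZG by auto
      then have "\<kappa> h = (\<lambda>j. 0)" using \<kappa>C[of h] by blast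
      then have "lc n a v = lc n (\<lambda>i. 0) v" using \<kappa>gp a by (simp add: lc_def)
      then have "\<forall>i<n. a i = 0" using spec[OF spec[OF vind, of a], of "\<lambda>i. 0"] by simp
      then have "gp G z a n = gp G z (\<lambda>i. 0) n" by (rule gp_cong)
      then have "h = gp G z (\<lambda>i. 0) n" using a by simp
      then show "h \<in> {\<one>}" using gp_zero by simp
    qed
    have "\<one> \<in> Zt" unfolding Zt_def using gp_zero by (metis rangeI)
    then show "{\<one>} \<subseteq> Zt \<inter> (Z \<inter> C)" using subgroup.one_closed[OF Zsub] subgroup.one_closed[OF Csub] by blast
  qed
  have prod: "Zt <#> (Z \<inter> C) = Z"
  proof
    show "Zt <#> (Z \<inter> C) \<subseteq> Z" unfolding set_mult_def using ZtZ subgroup.m_closed[OF Zsub] by blast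
    show "Z \<subseteq> Zt <#> (Z \<inter> C)"
    proof
      fix w assume w: "w \<in> Z"
      then have "\<kappa> w \<in> L" unfolding L_def by simp
      then obtain a where a: "\<kappa> w = lc n a v" using vspan by blast
      define t where "t = inv (gp G z a n) \<otimes> w"
      have wc: "w \<in> carrier G" using w ZG by blast
      have gc: "gp G z a n \<in> carrier G" using gpZ ZG by blast
      have tZ: "t \<in> Z" unfolding t_def using subgroup.m_closed[OF Zsub subgroup.m_inv_closed[OF Zsub gpZ] w] .
      have "\<kappa> t = (\<lambda>j. - \<kappa> (gp G z a n) j + \<kappa> w j)"
        unfolding t_def using \<kappa>add[OF inv_closed[OF gc] wc] \<kappa>inv[OF gc] by simp
      then have "\<kappa> t = (\<lambda>j. 0)" using \<kappa>gp a by simp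
      then have tC: "t \<in> C" using \<kappa>C[of t] tZ ZG by blast
      have "w = gp G z a n \<otimes> t" unfolding t_def using gc wc by (simp add: cancel1)
      then show "w \<in> Zt <#> (Z \<inter> C)" unfolding set_mult_def Zt_def using tZ tC by blast
    qed
  qed
  define ZC where "ZC = Z \<inter> C"
  have ZCsub: "subgroup ZC G" unfolding ZC_def using subgroups_Inter_pair[OF Zsub Csub] .
  have finZC: "finite ZC" using finC by (simp add: ZC_def)
  have genZC: "generate G ZC = ZC"
    using generate_subgroup_incl[OF subset_refl ZCsub] generate.incl[of _ ZC G] by blast
  have "\<exists>S. S \<subseteq> ZC \<and> finite S \<and> card S = card ZC \<and> generate G S = ZC"
    using finZC genZC by blast
  then have "\<exists>S. S \<subseteq> ZC \<and> finite S \<and> card S = group_rank G ZC \<and> generate G S = ZC"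
    unfolding group_rank_def by (rule LeastI)
  then obtain ST where ST: "ST \<subseteq> ZC" "finite ST" "card ST = group_rank G ZC" "generate G ST = ZC"
    by blast
  define S0 where "S0 = z ` {..<n} \<union> ST"
  have S0Z: "S0 \<subseteq> Z" using zZ ST(1) by (auto simp: S0_def ZC_def)
  have S0G: "S0 \<subseteq> carrier G" using S0Z ZG by blast
  have zS0: "\<forall>i<n. z i \<in> S0" by (simp add: S0_def)
  have genS0: "generate G S0 = Z"
  proof
    show "generate G S0 \<subseteq> Z" using generate_subgroup_incl[OF S0Z Zsub] .
    show "Z \<subseteq> generate G S0"
    proof
      fix w assume "w \<in> Z"
      then have "w \<in> Zt <#> (Z \<inter> C)" using prod by simp
      then obtain h t where ht: "h \<in> Zt" "t \<in> ZC" "w = h \<otimes> t" unfolding set_mult_def ZC_def by blast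
      obtain a where "h = gp G z a n" using ht(1) unfolding Zt_def by blast
      then have hg: "h \<in> generate G S0" using gp_gen[OF S0G zS0] by simp
      have "t \<in> generate G ST" using ht(2) ST(4) by simp
      then have tg: "t \<in> generate G S0" using mono_generate[of ST S0] by (auto simp: S0_def)
      show "w \<in> generate G S0" using generate.eng[OF hg tg] ht(3) by simp
    qed
  qed
  have finS0: "finite S0" using ST(2) by (simp add: S0_def)
  have cardS0: "card S0 \<le> n + group_rank G ZC"
  proof -
    have "card S0 \<le> card (z ` {..<n}) + card ST" unfolding S0_def by (rule card_Un_le)
    also have "card (z ` {..<n}) \<le> n" using card_image_le[of "{..<n}" z] by simp
    finally show ?thesis using ST(3) by simp
  qed
  have exS0: "\<exists>S. S \<subseteq> Z \<and> finite S \<and> card S = card S0 \<and> generate G S = Z"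
    using S0Z finS0 genS0 by blast
  have le1: "group_rank G Z \<le> n + group_rank G ZC"
  proof -
    have "group_rank G Z \<le> card S0" unfolding group_rank_def by (rule Least_le) (rule exS0)
    then show ?thesis using cardS0 by simp
  qed
  have "\<exists>S. S \<subseteq> Z \<and> finite S \<and> card S = group_rank G Z \<and> generate G S = Z"
    unfolding group_rank_def using exS0 by (rule LeastI)
  then obtain S where S: "S \<subseteq> Z" "finite S" "card S = group_rank G Z" "generate G S = Z"
    by blast
  have supp: "\<forall>b\<in>Z. \<forall>i\<ge>n. \<kappa> b i = 0"
  proof (intro ballI allI impI)
    fix b i assume "b \<in> Z" "n \<le> i"
    then show "\<kappa> b i = 0" using \<kappa>1[of b] ZG by blast
  qed
  have eic: "\<forall>i<n. \<exists>b\<in>Z. \<kappa> b i \<noteq> 0 \<and> (\<forall>j. j \<noteq> i \<longrightarrow> \<kappa> b j = 0)"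
  proof (intro allI impI)
    fix i assume "i < n"
    then obtain b N where bN: "b \<in> Z" "N > 0" "\<kappa> b = (\<lambda>j. if j = i then int N else 0)"
      using centralN by blast
    have "\<kappa> b i \<noteq> 0" using bN(2,3) by simp
    moreover have "\<forall>j. j \<noteq> i \<longrightarrow> \<kappa> b j = 0" using bN(3) by simp
    ultimately show "\<exists>b\<in>Z. \<kappa> b i \<noteq> 0 \<and> (\<forall>j. j \<noteq> i \<longrightarrow> \<kappa> b j = 0)" using bN(1) by blast
  qed
  have "\<exists>S'. finite S' \<and> card S' + n \<le> card S \<and> S' \<subseteq> Z \<and> generate G S' = {b\<in>Z. \<kappa> b = (\<lambda>j. 0)}"
    by (rule reduce_all[OF Zsub Zcomm \<kappa>Zadd supp eic S(2) S(1) S(4)])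
  then obtain S' where S': "finite S'" "card S' + n \<le> card S" "S' \<subseteq> Z"
    "generate G S' = {b\<in>Z. \<kappa> b = (\<lambda>j. 0)}" by blast
  have kerZ: "{b\<in>Z. \<kappa> b = (\<lambda>j. 0)} = ZC" unfolding ZC_def using \<kappa>C ZG by blast
  have S'ZC: "S' \<subseteq> ZC" using S'(4) kerZ generate.incl[of _ S' G] by blast
  have "group_rank G ZC \<le> card S'" unfolding group_rank_def
    by (rule Least_le) (use S'(1) S'(4) kerZ S'ZC in blast)
  then have le2: "n + group_rank G ZC \<le> group_rank G Z" using S'(2) S(3) by simp
  have main: "(\<exists>Zt. subgroup Zt G \<and> Zt \<subseteq> Z
           \<and> G\<lparr>carrier := Zt\<rparr> \<cong> free_Abelian_group {..<n}
           \<and> Zt \<inter> (Z \<inter> C) = {\<one>}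
           \<and> Zt <#> (Z \<inter> C) = Z)
         \<and> group_rank G Z = n + group_rank G (Z \<inter> C)"
    using Ztsub ZtZ isoZt int1 prod le1 le2 unfolding ZC_def by auto
  show ?thesis using main unfolding Z_def C_def .
qed

end
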